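(* Let $n\ge 5$ and let $f$ be an RDF of $P(n,2)$ of weight $\gamma_R(P(n,2))$ with $|V_2|$ minimum among all such minimum-weight RDFs. For any index $i$, if $r_f(V'(i,7)) \le 0.5$, then $v_{i+3}\notin V_2$.
   Context: For integers $n \ge 3$ and $1 \le k < n/2$, the generalized Petersen graph $P(n,k)$ has vertex set $\{v_i, u_i : 0 \le i \le n-1\}$ and edge set $\{v_iv_{i+1},\ v_iu_i,\ u_iu_{i+k} : 0 \le i \le n-1\}$, with subscripts taken modulo $n$. A Roman domination function (RDF) of a graph $G$ is a function $f: V(G)\to\{0,1,2\}$ such that every vertex $u$ with $f(u)=0$ is adjacent to at least one vertex $v$ with $f(v)=2$. Its weight is $\sum_{u\in V(G)} f(u)$; $\gamma_R(G)$ is the minimum weight of an RDF of $G$. For an RDF $f$ write $V_i=\{w: f(w)=i\}$, $i=0,1,2$. Define $g_f(w)=0.5$ if $w\in V_2$, $g_f(w)=1$ if $w\in V_1$, and $g_f(w)=0.5\,|N(w)\cap V_2|$ if $w\in V_0$, where $N(w)$ is the set of neighbors of $w$. Let $r_f(w)=g_f(w)-0.5$ and, for $S\subseteq V(P(n,2))$, $r_f(S)=\sum_{w\in S} r_f(w)$. For an integer $i$ and $t\ge 1$, $V'(i,t)=\{v_j,u_j : i\le j\le i+t-1\}$ (subscripts modulo $n$). *)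

theory Defs
  imports Complex_Main
begin

text \<open>Vertices of the generalized Petersen graph: outer vertices v_i and inner vertices u_i.\<close>
datatype gpv = Vo nat | Ui nat

definition gp_verts :: "nat \<Rightarrow> gpv set" where
  "gp_verts n = {Vo i | i. i < n} \<union> {Ui i | i. i < n}"

definition gp_edge :: "nat \<Rightarrow> nat \<Rightarrow> gpv \<Rightarrow> gpv \<Rightarrow> bool" where
  "gp_edge n k x y \<longleftrightarrow> (\<exists>i<n.
      (x = Vo i \<and> y = Vo ((i + 1) mod n)) \<or>
      (x = Vo i \<and> y = Ui i) \<or>
      (x = Ui i \<and> y = Ui ((i + k) mod n)))"

definition gp_adj :: "nat \<Rightarrow> nat \<Rightarrow> gpv \<Rightarrow> gpv \<Rightarrow> bool" where
  "gp_adj n k x y \<longleftrightarrow> gp_edge n k x y \<or> gp_edge n k y x"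

definition gp_nbhd :: "nat \<Rightarrow> nat \<Rightarrow> gpv \<Rightarrow> gpv set" where
  "gp_nbhd n k w = {y \<in> gp_verts n. gp_adj n k w y}"

definition is_RDF :: "nat \<Rightarrow> nat \<Rightarrow> (gpv \<Rightarrow> nat) \<Rightarrow> bool" where
  "is_RDF n k f \<longleftrightarrow> (\<forall>w\<in>gp_verts n. f w \<in> {0,1,2}) \<and>
     (\<forall>w\<in>gp_verts n. f w = 0 \<longrightarrow> (\<exists>y\<in>gp_verts n. gp_adj n k w y \<and> f y = 2))"

definition rdf_weight :: "nat \<Rightarrow> (gpv \<Rightarrow> nat) \<Rightarrow> nat" where
  "rdf_weight n f = (\<Sum>w\<in>gp_verts n. f w)"

definition gammaR :: "nat \<Rightarrow> nat \<Rightarrow> nat" where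
  "gammaR n k = (LEAST m. \<exists>f. is_RDF n k f \<and> rdf_weight n f = m)"

definition Vset :: "nat \<Rightarrow> (gpv \<Rightarrow> nat) \<Rightarrow> nat \<Rightarrow> gpv set" where
  "Vset n f j = {w \<in> gp_verts n. f w = j}"

definition g_f :: "nat \<Rightarrow> nat \<Rightarrow> (gpv \<Rightarrow> nat) \<Rightarrow> gpv \<Rightarrow> real" where
  "g_f n k f w = (if f w = 2 then 0.5 else if f w = 1 then 1
                  else 0.5 * real (card (gp_nbhd n k w \<inter> Vset n f 2)))"

definition r_f :: "nat \<Rightarrow> nat \<Rightarrow> (gpv \<Rightarrow> nat) \<Rightarrow> gpv \<Rightarrow> real" where
  "r_f n k f w = g_f n k f w - 0.5"

definition r_f_set :: "nat \<Rightarrow> nat \<Rightarrow> (gpv \<Rightarrow> nat) \<Rightarrow> gpv set \<Rightarrow> real" where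
  "r_f_set n k f S = (\<Sum>w\<in>S. r_f n k f w)"

definition Vprime :: "nat \<Rightarrow> int \<Rightarrow> nat \<Rightarrow> gpv set" where
  "Vprime n i t = {Vo (nat ((i + int j) mod int n)) | j. j < t} \<union>
                  {Ui (nat ((i + int j) mod int n)) | j. j < t}"

end

theory Submission imports Defs begin

lemma modshift:
  fixes m j d n :: nat
  assumes "m < n" "j < n" "d \<le> n"
  shows "((m + d) mod n = j) \<longleftrightarrow> ((j + n - d) mod n = m)"
  by (smt (verit, del_insts) add.assoc add.commute add_diff_cancel_left'
    assms(1,2,3) le_iff_add mod_add_right_eq mod_add_self1 mod_if)

lemma adjV:
  assumes "j < n" "5 \<le> n"
  shows "gp_adj n 2 (Vo j) y \<longleftrightarrow> (y = Vo ((j+1) mod n) \<or> y = Vo ((j+n-1) mod n) \<or> y = Ui j)"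
proof (cases y)
  case (Vo m)
  have "gp_adj n 2 (Vo j) (Vo m) \<longleftrightarrow> m = (j+1) mod n \<or> (m < n \<and> j = (m+1) mod n)"
    unfolding gp_adj_def gp_edge_def using assms by auto
  also have "\<dots> \<longleftrightarrow> m = (j+1) mod n \<or> m = (j+n-1) mod n"
    using modshift[of m n j 1] assms by (auto simp: less_imp_le)
  finally show ?thesis using Vo by simp
next
  case (Ui m)
  have "gp_adj n 2 (Vo j) (Ui m) \<longleftrightarrow> m = j"
    unfolding gp_adj_def gp_edge_def using assms by auto
  then show ?thesis using Ui by simp
qed

lemma adjU:
  assumes "j < n" "5 \<le> n"
  shows "gp_adj n 2 (Ui j) y \<longleftrightarrow> (y = Ui ((j+2) mod n) \<or> y = Ui ((j+n-2) mod n) \<or> y = Vo j)"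
proof (cases y)
  case (Ui m)
  have "gp_adj n 2 (Ui j) (Ui m) \<longleftrightarrow> m = (j+2) mod n \<or> (m < n \<and> j = (m+2) mod n)"
    unfolding gp_adj_def gp_edge_def using assms by auto
  also have "\<dots> \<longleftrightarrow> m = (j+2) mod n \<or> m = (j+n-2) mod n"
    using modshift[of m n j 2] assms by (auto simp: less_imp_le)
  finally show ?thesis using Ui by simp
next
  case (Vo m)
  have "gp_adj n 2 (Ui j) (Vo m) \<longleftrightarrow> m = j"
    unfolding gp_adj_def gp_edge_def using assms by auto
  then show ?thesis using Vo by simp
qed

definition cc :: "nat \<Rightarrow> int \<Rightarrow> int \<Rightarrow> nat" where
  "cc n i k = nat ((i + 3 + k) mod int n)"

lemma cc_lt: "0 < n \<Longrightarrow> cc n i k < n"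
  unfolding cc_def by (simp add: nat_less_iff)

lemma cc_int: "0 < n \<Longrightarrow> int (cc n i k) = (i + 3 + k) mod int n"
  unfolding cc_def by simp

lemma cc_plus: assumes "0 < n" shows "(cc n i k + d) mod n = cc n i (k + int d)"
proof -
  have "int ((cc n i k + d) mod n) = (int (cc n i k) + int d) mod int n" by (simp add: zmod_int)
  also have "\<dots> = ((i + 3 + k) mod int n + int d) mod int n" using assms cc_int by simp
  also have "\<dots> = (i + 3 + (k + int d)) mod int n" by (simp add: mod_add_left_eq add.assoc)
  also have "\<dots> = int (cc n i (k + int d))" using assms cc_int by simp
  finally show ?thesis by simp
qed

lemma cc_minus: assumes "0 < n" "d \<le> n" shows "(cc n i k + n - d) mod n = cc n i (k - int d)"
proof -
  have "int ((cc n i k + n - d) mod n) = (int (cc n i k) + int n - int d) mod int n"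
    using assms by (simp add: zmod_int of_nat_diff)
  also have "\<dots> = ((i + 3 + k) mod int n + int n - int d) mod int n" using assms cc_int by simp
  also have "\<dots> = ((i + 3 + k) mod int n + (int n - int d)) mod int n" by (simp add: algebra_simps)
  also have "\<dots> = (i + 3 + k + (int n - int d)) mod int n" by (rule mod_add_left_eq)
  also have "\<dots> = ((i + 3 + (k - int d)) + int n) mod int n" by (simp add: algebra_simps)
  also have "\<dots> = (i + 3 + (k - int d)) mod int n" by simp
  also have "\<dots> = int (cc n i (k - int d))" using assms cc_int by simp
  finally show ?thesis by simp
qed

lemma cc_inj: assumes "0 < n" "cc n i k = cc n i l" "\<bar>k - l\<bar> < int n" shows "k = l"
proof -
  have "(i + 3 + k) mod int n = (i + 3 + l) mod int n" using assms cc_int by metis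
  then have "int n dvd (k - l)"
    by (metis add_diff_cancel_left mod_eq_dvd_iff)
  show ?thesis
  proof (rule ccontr)
    assume "k \<noteq> l"
    then have "k - l \<noteq> 0" by simp
    from dvd_imp_le_int[OF this \<open>int n dvd (k - l)\<close>] assms(3) show False by simp
  qed
qed

lemma adjVc: assumes "5 \<le> n"
  shows "gp_adj n 2 (Vo (cc n i k)) y \<longleftrightarrow> (y = Vo (cc n i (k+1)) \<or> y = Vo (cc n i (k-1)) \<or> y = Ui (cc n i k))"
  using adjV[of "cc n i k" n y] assms cc_lt[of n i k] cc_plus[of n i k 1] cc_minus[of n 1 i k] by simp

lemma adjUc: assumes "5 \<le> n"
  shows "gp_adj n 2 (Ui (cc n i k)) y \<longleftrightarrow> (y = Ui (cc n i (k+2)) \<or> y = Ui (cc n i (k-2)) \<or> y = Vo (cc n i k))"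
  using adjU[of "cc n i k" n y] assms cc_lt[of n i k] cc_plus[of n i k 2] cc_minus[of n 2 i k] by simp

lemma gp_adj_sym: "gp_adj n k x y = gp_adj n k y x"
  unfolding gp_adj_def by auto

lemma verts_eq: "gp_verts n = Vo ` {..<n} \<union> Ui ` {..<n}"
  unfolding gp_verts_def by auto

lemma finite_verts: "finite (gp_verts n)"
  unfolding verts_eq by simp

lemma gammaR_le: "is_RDF n k g \<Longrightarrow> gammaR n k \<le> rdf_weight n g"
  unfolding gammaR_def by (rule Least_le) auto

lemma nbrs3:
  assumes "5 \<le> n" "x \<in> gp_verts n"
  shows "\<exists>a b c. \<forall>y. gp_adj n 2 x y \<longleftrightarrow> y \<in> {a,b,c}"
proof -
  from assms(2) obtain j where "j < n" and jj: "x = Vo j \<or> x = Ui j" unfolding gp_verts_def by auto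
  from jj show ?thesis
  proof
    assume "x = Vo j" then show ?thesis using adjV[OF \<open>j<n\<close> assms(1)] by blast
  next
    assume "x = Ui j" then show ?thesis using adjU[OF \<open>j<n\<close> assms(1)] by blast
  qed
qed

lemma no_self_adj:
  assumes "5 \<le> n" "x \<in> gp_verts n"
  shows "\<not> gp_adj n 2 x x"
proof -
  from assms(2) obtain j where j: "j < n" "x = Vo j \<or> x = Ui j" unfolding gp_verts_def by auto
  have a: "(j+1) mod n \<noteq> j" using j(1) assms(1)
  proof (cases "j + 1 < n")
    case False
    then have "(j+1) mod n = (j+1-n) mod n" by (simp add: le_mod_geq)
    then show ?thesis using False j(1) assms(1) by simp
  qed simp
  have b: "(j+n-1) mod n \<noteq> j" using j assms(1) modshift[of j n j 1] a by simp
  have c: "(j+2) mod n \<noteq> j" using j(1) assms(1)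
  proof (cases "j + 2 < n")
    case False
    then have "(j+2) mod n = (j+2-n) mod n" by (simp add: le_mod_geq)
    then show ?thesis using False j(1) assms(1) by simp
  qed simp
  have d: "(j+n-2) mod n \<noteq> j" using j assms(1) modshift[of j n j 2] c by simp
  from j(2) show ?thesis
  proof
    assume "x = Vo j" then show ?thesis using a b adjV[OF j(1) assms(1), of x] by simp
  next
    assume "x = Ui j" then show ?thesis using c d adjU[OF j(1) assms(1), of x] by simp
  qed
qed

lemma rdf_vals: "is_RDF n k f \<Longrightarrow> w \<in> gp_verts n \<Longrightarrow> f w = 0 \<or> f w = 1 \<or> f w = 2"
  unfolding is_RDF_def by auto

lemma rdf_dom: "is_RDF n k f \<Longrightarrow> w \<in> gp_verts n \<Longrightarrow> f w = 0 \<Longrightarrow> \<exists>y\<in>gp_verts n. gp_adj n k w y \<and> f y = 2"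
  unfolding is_RDF_def by auto

lemma no_V1_adj_V2:
  assumes rdf: "is_RDF n 2 f" and wt: "rdf_weight n f = gammaR n 2"
    and x: "x \<in> gp_verts n" "f x = 2" and y: "y \<in> gp_verts n" "gp_adj n 2 x y" "f y = 1"
  shows False
proof -
  define g where "g = f(y := 0)"
  have "is_RDF n 2 g"
    unfolding is_RDF_def
  proof (intro conjI ballI impI)
    fix w assume "w \<in> gp_verts n" then show "g w \<in> {0,1,2}" using rdf unfolding is_RDF_def g_def by auto
  next
    fix w assume w: "w \<in> gp_verts n" "g w = 0"
    show "\<exists>y\<in>gp_verts n. gp_adj n 2 w y \<and> g y = 2"
    proof (cases "w = y")
      case True
      then show ?thesis using x y gp_adj_sym[of n 2 x y] unfolding g_def by (intro bexI[of _ x]) auto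
    next
      case False
      then have "f w = 0" using w unfolding g_def by simp
      then obtain z where z: "z \<in> gp_verts n" "gp_adj n 2 w z" "f z = 2" using rdf_dom[OF rdf w(1)] by blast
      then have "z \<noteq> y" using y by auto
      then show ?thesis using z unfolding g_def by auto
    qed
  qed
  then have "gammaR n 2 \<le> rdf_weight n g" by (rule gammaR_le)
  moreover have "rdf_weight n g + 1 = rdf_weight n f"
  proof -
    have "rdf_weight n f = f y + (\<Sum>w\<in>gp_verts n - {y}. f w)"
      unfolding rdf_weight_def using y(1) finite_verts by (simp add: sum.remove)
    moreover have "rdf_weight n g = g y + (\<Sum>w\<in>gp_verts n - {y}. g w)"
      unfolding rdf_weight_def using y(1) finite_verts by (simp add: sum.remove)
    moreover have "(\<Sum>w\<in>gp_verts n - {y}. g w) = (\<Sum>w\<in>gp_verts n - {y}. f w)"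
      unfolding g_def by (rule sum.cong) auto
    ultimately show ?thesis using y unfolding g_def by simp
  qed
  ultimately show False using wt by simp
qed

lemma no_V2_adj_V2:
  assumes n5: "5 \<le> n" and rdf: "is_RDF n 2 f" and wt: "rdf_weight n f = gammaR n 2"
    and mn: "\<forall>g. is_RDF n 2 g \<and> rdf_weight n g = gammaR n 2 \<longrightarrow>
               card (Vset n f 2) \<le> card (Vset n g 2)"
    and x: "x \<in> gp_verts n" "f x = 2" and y: "y \<in> gp_verts n" "gp_adj n 2 x y" "f y = 2"
  shows False
proof -
  obtain a b c where N: "\<And>z. gp_adj n 2 x z \<longleftrightarrow> z \<in> {a,b,c}" using nbrs3[OF n5 x(1)] by blast
  have xy: "y \<noteq> x" using no_self_adj[OF n5 x(1)] y by auto
  define g where "g = (\<lambda>w. if w = x then 0 else if w \<in> {a,b,c} \<and> f w = 0 then 1 else f w)"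
  have "is_RDF n 2 g"
    unfolding is_RDF_def
  proof (intro conjI ballI impI)
    fix w assume "w \<in> gp_verts n" then show "g w \<in> {0,1,2}" using rdf unfolding is_RDF_def g_def by auto
  next
    fix w assume w: "w \<in> gp_verts n" "g w = 0"
    show "\<exists>y\<in>gp_verts n. gp_adj n 2 w y \<and> g y = 2"
    proof (cases "w = x")
      case True
      then show ?thesis using x y xy unfolding g_def by (intro bexI[of _ y]) auto
    next
      case False
      then have fw: "f w = 0" "w \<notin> {a,b,c}" using w unfolding g_def by (auto split: if_splits)
      then obtain z where z: "z \<in> gp_verts n" "gp_adj n 2 w z" "f z = 2" using rdf_dom[OF rdf w(1)] by blast
      have "z \<noteq> x"
      proof
        assume "z = x"
        then have "gp_adj n 2 x w" using z gp_adj_sym by metis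
        then show False using N fw by blast
      qed
      then have "g z = 2" using z unfolding g_def by auto
      then show ?thesis using z by blast
    qed
  qed
  note gle = gammaR_le[OF this]
  define P where "P = {w \<in> gp_verts n. w \<noteq> x \<and> w \<in> {a,b,c} \<and> f w = 0}"
  have "P \<subseteq> {a,b,c} - {y}" unfolding P_def using y by auto
  moreover have "card ({a,b,c} - {y}) \<le> 2"
  proof -
    have "y \<in> {a,b,c}" using N y by blast
    then have "card ({a,b,c} - {y}) = card {a,b,c} - 1" by (simp add: card_Diff_singleton)
    moreover have "card {a,b,c} \<le> 3" by (simp add: card_insert_if)
    ultimately show ?thesis by simp
  qed
  ultimately have cP: "card P \<le> 2" by (metis card_mono finite.emptyI finite.insertI finite_Diff le_trans)
  define h where "h = (\<lambda>w. if w = x then 0 else f w)"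
  have gw: "\<And>w. g w = h w + (if w \<noteq> x \<and> w \<in> {a,b,c} \<and> f w = 0 then 1 else 0)"
    unfolding g_def h_def by simp
  have cardP: "card P = (\<Sum>w\<in>gp_verts n. if w \<noteq> x \<and> w \<in> {a,b,c} \<and> f w = 0 then 1 else 0)"
    unfolding P_def using sum.inter_filter[OF finite_verts[of n], where g="\<lambda>_. 1::nat" and P="\<lambda>w. w \<noteq> x \<and> w \<in> {a,b,c} \<and> f w = 0"]
    by simp
  have "rdf_weight n g = (\<Sum>w\<in>gp_verts n. h w) + card P"
    unfolding rdf_weight_def cardP gw by (simp add: sum.distrib)
  moreover have "(\<Sum>w\<in>gp_verts n. h w) + 2 = rdf_weight n f"
  proof -
    have "rdf_weight n f = f x + (\<Sum>w\<in>gp_verts n - {x}. f w)"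
      unfolding rdf_weight_def using x(1) finite_verts by (simp add: sum.remove)
    moreover have "(\<Sum>w\<in>gp_verts n. h w) = h x + (\<Sum>w\<in>gp_verts n - {x}. h w)"
      using x(1) finite_verts by (simp add: sum.remove)
    moreover have "(\<Sum>w\<in>gp_verts n - {x}. h w) = (\<Sum>w\<in>gp_verts n - {x}. f w)"
      unfolding h_def by (rule sum.cong) auto
    ultimately show ?thesis using x unfolding h_def by simp
  qed
  ultimately have "rdf_weight n g \<le> rdf_weight n f" using cP by simp
  then have "rdf_weight n g = gammaR n 2" using gle wt by simp
  then have "card (Vset n f 2) \<le> card (Vset n g 2)" using mn \<open>is_RDF n 2 g\<close> by blast
  moreover have "Vset n g 2 = Vset n f 2 - {x}"
    unfolding Vset_def g_def by auto
  moreover have "x \<in> Vset n f 2" unfolding Vset_def using x by simp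
  moreover have "finite (Vset n f 2)" unfolding Vset_def using finite_verts by simp
  ultimately show False
    by (metis card_Diff1_less not_le)
qed

lemma nbhd_card_ge:
  assumes "B \<subseteq> {y \<in> gp_verts n. gp_adj n 2 w y \<and> f y = 2}"
  shows "card B \<le> card (gp_nbhd n 2 w \<inter> Vset n f 2)"
proof (rule card_mono)
  show "finite (gp_nbhd n 2 w \<inter> Vset n f 2)" unfolding gp_nbhd_def using finite_verts by simp
  show "B \<subseteq> gp_nbhd n 2 w \<inter> Vset n f 2" using assms unfolding gp_nbhd_def Vset_def by auto
qed

lemma r_nonneg:
  assumes rdf: "is_RDF n 2 f" and w: "w \<in> gp_verts n"
  shows "r_f n 2 f w \<ge> 0"
proof -
  consider "f w = 0" | "f w = 1" | "f w = 2" using rdf_vals[OF rdf w] by (elim disjE) simp_all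
  then show ?thesis
  proof cases
    case 1
    then obtain y where y: "y \<in> gp_verts n" "gp_adj n 2 w y" "f y = 2" using rdf_dom[OF rdf w] by blast
    have "card {y} \<le> card (gp_nbhd n 2 w \<inter> Vset n f 2)" by (rule nbhd_card_ge) (use y in auto)
    then show ?thesis using 1 unfolding r_f_def g_f_def by simp
  qed (auto simp: r_f_def g_f_def)
qed

lemma r_one: "f w = 1 \<Longrightarrow> r_f n 2 f w = 1/2"
  unfolding r_f_def g_f_def by simp

lemma r_two:
  assumes "f w = 0" "a \<noteq> b" "a \<in> gp_verts n" "b \<in> gp_verts n" "gp_adj n 2 w a" "gp_adj n 2 w b"
    "f a = 2" "f b = 2"
  shows "r_f n 2 f w \<ge> 1/2"
proof -
  have "card {a,b} \<le> card (gp_nbhd n 2 w \<inter> Vset n f 2)" by (rule nbhd_card_ge) (use assms in auto)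
  then show ?thesis using assms unfolding r_f_def g_f_def by simp
qed

lemma r_three:
  assumes "f w = 0" "a \<noteq> b" "a \<noteq> c" "b \<noteq> c" "a \<in> gp_verts n" "b \<in> gp_verts n" "c \<in> gp_verts n"
    "gp_adj n 2 w a" "gp_adj n 2 w b" "gp_adj n 2 w c"
    "f a = 2" "f b = 2" "f c = 2"
  shows "r_f n 2 f w \<ge> 1"
proof -
  have "card {a,b,c} \<le> card (gp_nbhd n 2 w \<inter> Vset n f 2)" by (rule nbhd_card_ge) (use assms in auto)
  then show ?thesis using assms unfolding r_f_def g_f_def by simp
qed

lemma Vprime_sub: "0 < n \<Longrightarrow> Vprime n i t \<subseteq> gp_verts n"
  unfolding Vprime_def gp_verts_def by (auto simp: nat_less_iff)

lemma Vprime_fin: "finite (Vprime n i t)"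
proof -
  have "Vprime n i t = (\<lambda>j. Vo (nat ((i + int j) mod int n))) ` {..<t} \<union> (\<lambda>j. Ui (nat ((i + int j) mod int n))) ` {..<t}"
    unfolding Vprime_def by auto
  then show ?thesis by simp
qed

lemma Vprime_memV: "-3 \<le> k \<Longrightarrow> k \<le> 3 \<Longrightarrow> Vo (cc n i k) \<in> Vprime n i 7"
  unfolding Vprime_def cc_def
  by (rule UnI1, rule CollectI, rule exI[of _ "nat (k+3)"]) (simp add: algebra_simps)

lemma Vprime_memU: "-3 \<le> k \<Longrightarrow> k \<le> 3 \<Longrightarrow> Ui (cc n i k) \<in> Vprime n i 7"
  unfolding Vprime_def cc_def
  by (rule UnI2, rule CollectI, rule exI[of _ "nat (k+3)"]) (simp add: algebra_simps)

lemma verts_V: "0 < n \<Longrightarrow> Vo (cc n i k) \<in> gp_verts n"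
  using cc_lt unfolding gp_verts_def by auto
lemma verts_U: "0 < n \<Longrightarrow> Ui (cc n i k) \<in> gp_verts n"
  using cc_lt unfolding gp_verts_def by auto

theorem lemma2p5:
  fixes n :: nat and f :: "gpv \<Rightarrow> nat" and i :: int
  assumes "n \<ge> 5"
    and "is_RDF n 2 f"
    and "rdf_weight n f = gammaR n 2"
    and "\<forall>g. is_RDF n 2 g \<and> rdf_weight n g = gammaR n 2 \<longrightarrow>
               card (Vset n f 2) \<le> card (Vset n g 2)"
    and "r_f_set n 2 f (Vprime n i 7) \<le> 0.5"
  shows "Vo (nat ((i + 3) mod int n)) \<notin> Vset n f 2"
proof
  assume A: "Vo (nat ((i + 3) mod int n)) \<in> Vset n f 2"
  have n0: "0 < n" using assms(1) by simp
  define V where "V = (\<lambda>k. Vo (cc n i k))"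
  define U where "U = (\<lambda>k. Ui (cc n i k))"
  define R where "R = r_f n 2 f"
  have vV: "\<And>k. V k \<in> gp_verts n" unfolding V_def using verts_V[OF n0] by simp
  have vU: "\<And>k. U k \<in> gp_verts n" unfolding U_def using verts_U[OF n0] by simp
  have aV: "\<And>k y. gp_adj n 2 (V k) y \<longleftrightarrow> (y = V (k+1) \<or> y = V (k-1) \<or> y = U k)"
    unfolding V_def U_def using adjVc[OF assms(1)] by simp
  have aU: "\<And>k y. gp_adj n 2 (U k) y \<longleftrightarrow> (y = U (k+2) \<or> y = U (k-2) \<or> y = V k)"
    unfolding V_def U_def using adjUc[OF assms(1)] by simp
  have injV: "\<And>k l. \<bar>k - l\<bar> \<le> 4 \<Longrightarrow> k \<noteq> l \<Longrightarrow> V k \<noteq> V l"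
    unfolding V_def using cc_inj[OF n0] assms(1) by fastforce
  have injU: "\<And>k l. \<bar>k - l\<bar> \<le> 4 \<Longrightarrow> k \<noteq> l \<Longrightarrow> U k \<noteq> U l"
    unfolding U_def using cc_inj[OF n0] assms(1) by fastforce
  have VU: "\<And>k l. V k \<noteq> U l" unfolding V_def U_def by simp
  have f0: "f (V 0) = 2" using A unfolding V_def cc_def Vset_def by simp
  have ind: "\<And>x y. x \<in> gp_verts n \<Longrightarrow> f x = 2 \<Longrightarrow> y \<in> gp_verts n \<Longrightarrow> gp_adj n 2 x y \<Longrightarrow> f y \<noteq> 2"
    using no_V2_adj_V2[OF assms(1,2,3,4)] by blast
  have zero: "\<And>x y. x \<in> gp_verts n \<Longrightarrow> f x = 2 \<Longrightarrow> y \<in> gp_verts n \<Longrightarrow> gp_adj n 2 x y \<Longrightarrow> f y = 0"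
  proof -
    fix x y assume h: "x \<in> gp_verts n" "f x = 2" "y \<in> gp_verts n" "gp_adj n 2 x y"
    have "f y \<noteq> 2" using ind h by blast
    moreover have "f y \<noteq> 1" using no_V1_adj_V2[OF assms(2,3) h(1,2,3,4)] by blast
    ultimately show "f y = 0" using rdf_vals[OF assms(2) h(3)] by blast
  qed
  have dom: "\<And>w. w \<in> gp_verts n \<Longrightarrow> f w = 0 \<Longrightarrow> \<exists>y. gp_adj n 2 w y \<and> f y = 2"
    using rdf_dom[OF assms(2)] by blast
  have valV: "\<And>k. f (V k) = 0 \<or> f (V k) = 1 \<or> f (V k) = 2" using rdf_vals[OF assms(2) vV] by blast
  have valU: "\<And>k. f (U k) = 0 \<or> f (U k) = 1 \<or> f (U k) = 2" using rdf_vals[OF assms(2) vU] by blast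
  have nnV: "\<And>k. R (V k) \<ge> 0" unfolding R_def using r_nonneg[OF assms(2) vV] by blast
  have nnU: "\<And>k. R (U k) \<ge> 0" unfolding R_def using r_nonneg[OF assms(2) vU] by blast
  have sub: "Vprime n i 7 \<subseteq> gp_verts n" by (rule Vprime_sub[OF n0])
  have mono: "\<And>B. B \<subseteq> Vprime n i 7 \<Longrightarrow> sum R B \<le> 1/2"
  proof -
    fix B assume "B \<subseteq> Vprime n i 7"
    then have "sum R B \<le> sum R (Vprime n i 7)"
      by (rule sum_mono2[OF Vprime_fin]) (use sub r_nonneg[OF assms(2)] in \<open>auto simp: R_def\<close>)
    then show "sum R B \<le> 1/2" using assms(5) unfolding r_f_set_def R_def by simp
  qed
  have mV: "\<And>k. -3 \<le> k \<Longrightarrow> k \<le> 3 \<Longrightarrow> V k \<in> Vprime n i 7" unfolding V_def by (rule Vprime_memV)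
  have mU: "\<And>k. -3 \<le> k \<Longrightarrow> k \<le> 3 \<Longrightarrow> U k \<in> Vprime n i 7" unfolding U_def by (rule Vprime_memU)
  have pair: "\<And>a b. a \<in> Vprime n i 7 \<Longrightarrow> b \<in> Vprime n i 7 \<Longrightarrow> a \<noteq> b \<Longrightarrow> R a + R b \<le> 1/2"
  proof -
    fix a b assume "a \<in> Vprime n i 7" "b \<in> Vprime n i 7" "a \<noteq> b"
    then have "sum R {a,b} \<le> 1/2" by (intro mono) auto
    then show "R a + R b \<le> 1/2" using \<open>a \<noteq> b\<close> by simp
  qed
  have single: "\<And>a. a \<in> Vprime n i 7 \<Longrightarrow> R a \<le> 1/2"
  proof -
    fix a assume "a \<in> Vprime n i 7"
    then have "sum R {a} \<le> 1/2" by (intro mono) auto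
    then show "R a \<le> 1/2" by simp
  qed
  have fV1: "f (V 1) = 0" by (rule zero[OF vV f0 vV]) (simp add: aV)
  have fVm1: "f (V (-1)) = 0" by (rule zero[OF vV f0 vV]) (simp add: aV)
  have fU0: "f (U 0) = 0" by (rule zero[OF vV f0 vU]) (simp add: aV)
  have dV: "V (-2) \<noteq> V (-1) \<and> V (-2) \<noteq> V 1 \<and> V (-2) \<noteq> V 2 \<and> V (-1) \<noteq> V 1 \<and> V (-1) \<noteq> V 2 \<and> V 1 \<noteq> V 2
      \<and> V 0 \<noteq> V 2 \<and> V 0 \<noteq> V (-2)"
    by (intro conjI; rule injV; simp)
  have dU: "U (-1) \<noteq> U 0 \<and> U (-1) \<noteq> U 1 \<and> U 0 \<noteq> U 1 \<and> U 2 \<noteq> U (-2)"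
    by (intro conjI; rule injU; simp)
  have rV1a: "f (V 2) = 2 \<Longrightarrow> R (V 1) \<ge> 1/2" unfolding R_def
    by (rule r_two[of f "V 1" "V 0" "V 2" n]) (use fV1 dV f0 vV in \<open>auto simp: aV\<close>)
  have rV1b: "f (U 1) = 2 \<Longrightarrow> R (V 1) \<ge> 1/2" unfolding R_def
    by (rule r_two[of f "V 1" "V 0" "U 1" n]) (use fV1 VU f0 vV vU in \<open>auto simp: aV\<close>)
  have rV1c: "f (V 2) = 2 \<Longrightarrow> f (U 1) = 2 \<Longrightarrow> R (V 1) \<ge> 1" unfolding R_def
    by (rule r_three[of f "V 1" "V 0" "V 2" "U 1" n]) (use fV1 dV VU f0 vV vU in \<open>auto simp: aV\<close>)
  have rVm1a: "f (V (-2)) = 2 \<Longrightarrow> R (V (-1)) \<ge> 1/2" unfolding R_def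
    by (rule r_two[of f "V (-1)" "V 0" "V (-2)" n]) (use fVm1 dV f0 vV in \<open>auto simp: aV\<close>)
  have rVm1b: "f (U (-1)) = 2 \<Longrightarrow> R (V (-1)) \<ge> 1/2" unfolding R_def
    by (rule r_two[of f "V (-1)" "V 0" "U (-1)" n]) (use fVm1 VU f0 vV vU in \<open>auto simp: aV\<close>)
  have rVm1c: "f (V (-2)) = 2 \<Longrightarrow> f (U (-1)) = 2 \<Longrightarrow> R (V (-1)) \<ge> 1" unfolding R_def
    by (rule r_three[of f "V (-1)" "V 0" "V (-2)" "U (-1)" n]) (use fVm1 dV VU f0 vV vU in \<open>auto simp: aV\<close>)
  have rU0a: "f (U 2) = 2 \<Longrightarrow> R (U 0) \<ge> 1/2" unfolding R_def
    by (rule r_two[of f "U 0" "V 0" "U 2" n]) (use fU0 VU f0 vV vU in \<open>auto simp: aU\<close>)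
  have rU0b: "f (U (-2)) = 2 \<Longrightarrow> R (U 0) \<ge> 1/2" unfolding R_def
    by (rule r_two[of f "U 0" "V 0" "U (-2)" n]) (use fU0 VU f0 vV vU in \<open>auto simp: aU\<close>)
  have rU0c: "f (U 2) = 2 \<Longrightarrow> f (U (-2)) = 2 \<Longrightarrow> R (U 0) \<ge> 1" unfolding R_def
    by (rule r_three[of f "U 0" "V 0" "U 2" "U (-2)" n]) (use fU0 dU VU f0 vV vU in \<open>auto simp: aU\<close>)
  have r1: "\<And>w. f w = 1 \<Longrightarrow> R w = 1/2" unfolding R_def by (rule r_one)
  have sum7: "R (V (-2)) + R (V (-1)) + R (V 1) + R (V 2) + R (U (-1)) + R (U 0) + R (U 1) \<le> 1/2"
  proof -
    have "sum R {V (-2), V (-1), V 1, V 2, U (-1), U 0, U 1} \<le> 1/2"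
      by (rule mono) (auto intro: mV mU)
    then show ?thesis using dV dU VU by (simp add: add.assoc)
  qed
  have caseR: False if nR: "f (V 2) = 0" "f (U 2) \<noteq> 2" "f (U 1) = 0"
  proof -
    obtain y where y: "gp_adj n 2 (V 2) y" "f y = 2" using dom[OF vV nR(1)] by blast
    have fV3: "f (V 3) = 2" using y nR fV1 by (auto simp: aV)
    have "f (U 3) \<noteq> 2" by (rule ind[OF vV fV3 vU]) (simp add: aV)
    obtain y' where y': "gp_adj n 2 (U 1) y'" "f y' = 2" using dom[OF vU nR(3)] by blast
    have fUm1: "f (U (-1)) = 2" using y' \<open>f (U 3) \<noteq> 2\<close> fV1 by (auto simp: aU)
    have h1: "R (V (-1)) \<ge> 1/2" by (rule rVm1b[OF fUm1])
    consider "f (V (-2)) = 1" | "f (V (-2)) = 2" | "f (V (-2)) = 0 \<and> f (U (-2)) = 2"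
      | "f (V (-2)) = 0 \<and> f (U (-2)) \<noteq> 2" using valV[of "-2"] by blast
    then show False
    proof cases
      case 1
      then show False using pair[OF mV[of "-2"] mV[of "-1"]] r1 h1 dV by force
    next
      case 2
      then show False using single[OF mV[of "-1"]] rVm1c fUm1 by force
    next
      case 3
      then show False using pair[OF mV[of "-1"] mU[of 0]] rU0b h1 VU by force
    next
      case 4
      obtain z where z: "gp_adj n 2 (V (-2)) z" "f z = 2" using dom[OF vV] 4 by blast
      have fVm3: "f (V (-3)) = 2" using z 4 fVm1 by (auto simp: aV)
      have fUm3: "f (U (-3)) = 0" by (rule zero[OF vV fVm3 vU]) (simp add: aV)
      have "R (U (-3)) \<ge> 1/2" unfolding R_def
        by (rule r_two[of f "U (-3)" "V (-3)" "U (-1)" n]) (use fUm3 VU fVm3 fUm1 vV vU in \<open>auto simp: aU\<close>)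
      then show False using pair[OF mV[of "-1"] mU[of "-3"]] h1 VU by force
    qed
  qed
  have caseL: False if nL: "f (V (-2)) = 0" "f (U (-2)) \<noteq> 2" "f (U (-1)) = 0"
  proof -
    obtain y where y: "gp_adj n 2 (V (-2)) y" "f y = 2" using dom[OF vV nL(1)] by blast
    have fV3: "f (V (-3)) = 2" using y nL fVm1 by (auto simp: aV)
    have "f (U (-3)) \<noteq> 2" by (rule ind[OF vV fV3 vU]) (simp add: aV)
    obtain y' where y': "gp_adj n 2 (U (-1)) y'" "f y' = 2" using dom[OF vU nL(3)] by blast
    have fU1: "f (U 1) = 2" using y' \<open>f (U (-3)) \<noteq> 2\<close> fVm1 by (auto simp: aU)
    have h1: "R (V 1) \<ge> 1/2" by (rule rV1b[OF fU1])
    consider "f (V 2) = 1" | "f (V 2) = 2" | "f (V 2) = 0 \<and> f (U 2) = 2"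
      | "f (V 2) = 0 \<and> f (U 2) \<noteq> 2" using valV[of 2] by blast
    then show False
    proof cases
      case 1
      then show False using pair[OF mV[of 2] mV[of 1]] r1 h1 dV by force
    next
      case 2
      then show False using single[OF mV[of 1]] rV1c fU1 by force
    next
      case 3
      then show False using pair[OF mV[of 1] mU[of 0]] rU0a h1 VU by force
    next
      case 4
      obtain z where z: "gp_adj n 2 (V 2) z" "f z = 2" using dom[OF vV] 4 by blast
      have fV3': "f (V 3) = 2" using z 4 fV1 by (auto simp: aV)
      have fU3: "f (U 3) = 0" by (rule zero[OF vV fV3' vU]) (simp add: aV)
      have "R (U 3) \<ge> 1/2" unfolding R_def
        by (rule r_two[of f "U 3" "V 3" "U 1" n]) (use fU3 VU fV3' fU1 vV vU in \<open>auto simp: aU\<close>)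
      then show False using pair[OF mV[of 1] mU[of 3]] h1 VU by force
    qed
  qed
  have Rb: "R (V 1) + R (V 2) + R (U 1) \<ge> 1/2" if "f (V 2) \<noteq> 0 \<or> f (U 1) \<noteq> 0"
    using that valV[of 2] valU[of 1] r1 rV1a rV1b nnV[of 1] nnV[of 2] nnU[of 1] by auto
  have Lb: "R (V (-1)) + R (V (-2)) + R (U (-1)) \<ge> 1/2" if "f (V (-2)) \<noteq> 0 \<or> f (U (-1)) \<noteq> 0"
    using that valV[of "-2"] valU[of "-1"] r1 rVm1a rVm1b nnV[of "-1"] nnV[of "-2"] nnU[of "-1"] by auto
  have nn: "R (V (-2)) \<ge> 0" "R (V (-1)) \<ge> 0" "R (V 1) \<ge> 0" "R (V 2) \<ge> 0" "R (U (-1)) \<ge> 0" "R (U 0) \<ge> 0" "R (U 1) \<ge> 0"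
    using nnV nnU by auto
  show False
  proof (cases "f (V 2) \<noteq> 0 \<or> f (U 1) \<noteq> 0")
    case True
    note R' = Rb[OF True]
    show False
    proof (cases "f (V (-2)) \<noteq> 0 \<or> f (U (-1)) \<noteq> 0")
      case True
      then show False using Lb R' sum7 nn by linarith
    next
      case False
      then show False using caseL rU0b R' sum7 nn by force
    qed
  next
    case False
    show False
    proof (cases "f (U 2) = 2")
      case True
      show False
      proof (cases "f (V (-2)) \<noteq> 0 \<or> f (U (-1)) \<noteq> 0")
        case True
        then show False using Lb rU0a \<open>f (U 2) = 2\<close> sum7 nn by force
      next
        case F2: False
        then show False using caseL rU0c \<open>f (U 2) = 2\<close> sum7 nn by force
      qed
    next
      case False
      then show False using caseR \<open>\<not> (f (V 2) \<noteq> 0 \<or> f (U 1) \<noteq> 0)\<close> by blast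
    qed
  qed
qed

end
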